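(* Let $\mathbf{M}_\sigma\in\mathbb{R}^{n\times n}$ be symmetric positive semidefinite, $\mathbf{M}_\nu\in\mathbb{R}^{n\times n}$ symmetric positive definite, $\mathbf{C}\in\mathbb{R}^{n\times n}$ (discrete curl), $\mathbf{P}\in\mathbb{R}^{n\times k}$ (reduced projection of a tree-cotree gauge in the non-conducting region) and $\mathbf{X}_\mathrm{s}\in\mathbb{R}^{n\times n_\mathrm{s}}$ (discrete winding function). Set $\bar{\mathbf{M}}_\sigma=\mathbf{P}^\top\mathbf{M}_\sigma\mathbf{P}$, $\mathbf{K}_\nu=\mathbf{P}^\top\mathbf{C}^\top\mathbf{M}_\nu\mathbf{C}\mathbf{P}$, $\bar{\mathbf{X}}_\mathrm{s}=\mathbf{P}^\top\mathbf{X}_\mathrm{s}$, and assume that $\lambda\bar{\mathbf{M}}_\sigma+\mathbf{K}_\nu$ is positive definite for every $\lambda>0$, that $\bar{\mathbf{X}}_\mathrm{s}$ has full column rank, and that $\mathrm{im}\,\bar{\mathbf{X}}_\mathrm{s}\perp\mathrm{im}\,\bar{\mathbf{M}}_\sigma$. Then the gauged, spatially discretised A* system with circuit coupling \begin{align*} \bar{\mathbf{M}}_\sigma\tfrac{\mathrm{d}}{\mathrm{d}t}\mathbf{a}_\mathrm{red}+\mathbf{K}_\nu\mathbf{a}_\mathrm{red}-\bar{\mathbf{X}}_\mathrm{s}\mathbf{i}_\mathrm{s}&=0,\\ \tfrac{\mathrm{d}}{\mathrm{d}t}\bar{\mathbf{X}}_\mathrm{s}^\top\mathbf{a}_\mathrm{red}-\mathbf{v}_\mathrm{s}&=0,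 \end{align*} with $\mathbf{x}_\lambda=\mathbf{a}_\mathrm{red}$, $\mathbf{i}_\lambda=\mathbf{i}_\mathrm{s}$, $\mathbf{v}_\lambda=\mathbf{v}_\mathrm{s}$, is an inductance-like element.
   Context: Positive definite means $\mathbf{x}^\top\mathbf{M}\mathbf{x}>0$ for $\mathbf{x}\ne0$. Inductance-like element: a device described by a DAE $\mathbf{F}(\frac{\mathrm{d}}{\mathrm{d}t}\mathbf{x}_\lambda,\frac{\mathrm{d}}{\mathrm{d}t}\mathbf{i}_\lambda,\mathbf{x}_\lambda,\mathbf{i}_\lambda,\mathbf{v}_\lambda,t)=0$ with $\mathbf{x}_\lambda:\mathcal{I}\to\mathbb{R}^{n_\mathrm{dof}}$, $\mathbf{i}_\lambda,\mathbf{v}_\lambda:\mathcal{I}\to\mathbb{R}^{n_\lambda}$, such that at most one differentiation $\frac{\mathrm{d}}{\mathrm{d}t}\mathbf{F}=0$ is needed to obtain from $\mathbf{F}=0$ and $\frac{\mathrm{d}}{\mathrm{d}t}\mathbf{F}=0$ (by algebraic manipulations) a system $\frac{\mathrm{d}}{\mathrm{d}t}\mathbf{x}_\lambda=\mathbf{f}_\mathbf{x}(\mathbf{x}_\lambda,\mathbf{i}_\lambda,\mathbf{v}_\lambda,t)$, $\frac{\mathrm{d}}{\mathrm{d}t}\phi(\mathbf{i}_\lambda,\mathbf{x}_\lambda,t)=\mathbf{f}_\phi(\mathbf{x}_\lambda,\mathbf{i}_\lambda,\mathbf{v}_\lambda,t)$, where $\partial\phi/\partial\mathbf{i}_\lambda$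 is regular and $\frac{\partial}{\partial\mathbf{v}_\lambda}\Big((\frac{\partial\phi}{\partial\mathbf{i}_\lambda})^{-1}(-\frac{\partial\phi}{\partial\mathbf{x}_\lambda}\mathbf{f}_\mathbf{x}-\frac{\partial\phi}{\partial t}+\mathbf{f}_\phi)\Big)$ is positive definite. $\mathbf{a}_\mathrm{red}$ are the gauged degrees of freedom of the magnetic vector potential; $\mathbf{M}_\sigma,\mathbf{M}_\nu$ are the conductivity and reluctivity material matrices. *)

theory Defs
  imports "HOL-Analysis.Analysis"
begin

definition pos_def_mat :: "real^'n^'n \<Rightarrow> bool" where
  "pos_def_mat M \<longleftrightarrow> (\<forall>x. x \<noteq> 0 \<longrightarrow> x \<bullet> (M *v x) > 0)"

definition pos_semidef_mat :: "real^'n^'n \<Rightarrow> bool" where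
  "pos_semidef_mat M \<longleftrightarrow> (\<forall>x. x \<bullet> (M *v x) \<ge> 0)"

definition pos_def_map :: "(real^'n \<Rightarrow> real^'n) \<Rightarrow> bool" where
  "pos_def_map L \<longleftrightarrow> (\<forall>w. w \<noteq> 0 \<longrightarrow> w \<bullet> L w > 0)"

text \<open>The expression
  (d phi/d i)^{-1} (- d phi/d x f_x - d phi/d t + f_phi), evaluated at (x,i,v,t),
  where phi is a function of the tuple (i,x,t).\<close>
definition ind_expr ::
  "((real^'l) \<times> (real^'x) \<times> real \<Rightarrow> real^'l) \<Rightarrow>
   (real^'x \<Rightarrow> real^'l \<Rightarrow> real^'l \<Rightarrow> real \<Rightarrow> real^'x) \<Rightarrow>
   (real^'x \<Rightarrow> real^'l \<Rightarrow> real^'l \<Rightarrow> real \<Rightarrow> real^'l) \<Rightarrow>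
   real^'x \<Rightarrow> real^'l \<Rightarrow> real^'l \<Rightarrow> real \<Rightarrow> real^'l" where
  "ind_expr phi fx fphi x i v t =
     (let D = frechet_derivative phi (at (i, x, t))
      in inv (\<lambda>h. D (h, 0, 0))
           (- D (0, fx x i v t, 0) - D (0, 0, 1) + fphi x i v t))"

text \<open>The "algebraic manipulations" from F = 0 and
  dF/dt = 0 are read pointwise on jets: whenever the values
  (x', i', x'', i'', x, i, v, v', t) satisfy F = 0 and the total time derivative
  DF (x'', i'', x', i', v', 1) = 0, the derived relations x' = f_x(x,i,v,t) and
  d/dt phi(i,x,t) = Dphi (i', x', 1) = f_phi(x,i,v,t) hold.\<close>
definition inductance_like ::
  "((real^'x) \<times> (real^'l) \<times> (real^'x) \<times> (real^'l) \<times> (real^'l) \<times> real \<Rightarrow> 'r::real_normed_vector)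
   \<Rightarrow> bool" where
  "inductance_like F \<longleftrightarrow>
     (\<forall>z. F differentiable (at z)) \<and>
     (\<exists>(fx :: real^'x \<Rightarrow> real^'l \<Rightarrow> real^'l \<Rightarrow> real \<Rightarrow> real^'x)
        (fphi :: real^'x \<Rightarrow> real^'l \<Rightarrow> real^'l \<Rightarrow> real \<Rightarrow> real^'l)
        (phi :: (real^'l) \<times> (real^'x) \<times> real \<Rightarrow> real^'l).
        (\<forall>p. phi differentiable (at p)) \<and>
        (\<forall>i x t. bij (\<lambda>h. frechet_derivative phi (at (i, x, t)) (h, 0, 0))) \<and>
        (\<forall>x i v t. (\<lambda>w. ind_expr phi fx fphi x i w t) differentiable (at v) \<and>
            pos_def_map (frechet_derivative (\<lambda>w. ind_expr phi fx fphi x i w t) (at v))) \<and>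
        (\<forall>x' i' x'' i'' x i v v' t.
            F (x', i', x, i, v, t) = 0 \<and>
            frechet_derivative F (at (x', i', x, i, v, t)) (x'', i'', x', i', v', 1) = 0
            \<longrightarrow> x' = fx x i v t \<and>
                frechet_derivative phi (at (i, x, t)) (i', x', 1) = fphi x i v t))"

definition Astar_DAE ::
  "real^'k^'k \<Rightarrow> real^'k^'k \<Rightarrow> real^'s^'k \<Rightarrow>
   (real^'k) \<times> (real^'s) \<times> (real^'k) \<times> (real^'s) \<times> (real^'s) \<times> real \<Rightarrow> (real^'k) \<times> (real^'s)" where
  "Astar_DAE Mbar K Xbar = (\<lambda>(da, di, a, i, v, t).
     (Mbar *v da + K *v a - Xbar *v i, transpose Xbar *v da - v))"

end

theory Submission
  imports Defs
begin

lemma sym_inner: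
  fixes M :: "real^'k^'k"
  assumes "transpose M = M"
  shows "x \<bullet> (M *v y) = (M *v x) \<bullet> y"
  by (metis assms dot_lmul_matrix vector_transpose_matrix)

lemma adj_inner:
  fixes X :: "real^'s^'k"
  shows "x \<bullet> (X *v w) = (transpose X *v x) \<bullet> w"
  by (metis dot_lmul_matrix transpose_transpose vector_transpose_matrix)

locale core =
  fixes M K :: "real^'k^'k" and X :: "real^'s^'k"
  assumes hM: "transpose M = M" and hK: "transpose K = K"
    and hpd: "\<And>y. y \<noteq> 0 \<Longrightarrow> y \<bullet> ((M + K) *v y) > 0"
    and hX: "inj ((*v) X)"
    and horth: "\<And>u w. (X *v u) \<bullet> (M *v w) = 0"
begin

definition R where
  "R x i v a j \<longleftrightarrow> M *v a + K *v x = X *v i \<and> transpose X *v a = v \<and>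
      (\<exists>e. M *v e + K *v a = X *v j)"

lemma kerM: assumes "M *v d = 0" "d \<bullet> (K *v d) = 0" shows "d = 0"
proof (rule ccontr)
  assume "d \<noteq> 0"
  from hpd[OF this] have "0 < d \<bullet> (M *v d) + d \<bullet> (K *v d)"
    by (simp add: matrix_vector_mult_add_rdistrib inner_add_right)
  with assms show False by simp
qed

lemma Xinj0: "X *v u = 0 \<Longrightarrow> u = 0"
  using hX by (metis injD matrix_vector_mult_0_right)

lemma inter0: assumes "X *v u = M *v e" shows "u = 0"
proof -
  have "(X *v u) \<bullet> (X *v u) = 0" using horth[of u e] assms by simp
  then show ?thesis using Xinj0 by simp
qed

lemma uniq:
  assumes "R x i v a j" "R x i v b l" shows "a = b \<and> j = l"
proof -
  from assms obtain e1 e2 where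
    1: "M *v a + K *v x = X *v i" "transpose X *v a = v" "M *v e1 + K *v a = X *v j" and
    2: "M *v b + K *v x = X *v i" "transpose X *v b = v" "M *v e2 + K *v b = X *v l"
    unfolding R_def by blast
  define d where "d = a - b"
  have "M *v a = M *v b" using 1(1) 2(1) by (metis add_right_cancel)
  hence Md: "M *v d = 0" unfolding d_def by (simp add: matrix_vector_mult_diff_distrib)
  have Xd: "transpose X *v d = 0" using 1 2 unfolding d_def by (simp add: matrix_vector_mult_diff_distrib)
  have ka: "K *v a = X *v j - M *v e1" and kb: "K *v b = X *v l - M *v e2"
    using 1(3) 2(3) by (simp_all add: algebra_simps)
  have Kd: "K *v d = X *v (j - l) - M *v (e1 - e2)"
    unfolding d_def matrix_vector_mult_diff_distrib ka kb by simp
  have "d \<bullet> (K *v d) = (transpose X *v d) \<bullet> (j - l) - (M *v d) \<bullet> (e1 - e2)"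
    unfolding Kd inner_diff_right adj_inner hM ..
  also have "\<dots> = 0" using Md Xd by simp
  finally have "d = 0" using kerM Md by blast
  hence ab: "a = b" unfolding d_def by simp
  have "X *v j - M *v e1 = X *v l - M *v e2" using ka kb ab by simp
  hence "X *v (j - l) = M *v (e1 - e2)"
    by (simp add: matrix_vector_mult_diff_distrib algebra_simps)
  hence "j - l = 0" by (rule inter0)
  with ab show ?thesis by simp
qed

lemma R_diff:
  assumes "R x i v a j" "R 0 0 v b l" shows "R x i 0 (a - b) (j - l)"
proof -
  from assms obtain e1 e2 where
    1: "M *v a + K *v x = X *v i" "transpose X *v a = v" "M *v e1 + K *v a = X *v j" and
    2: "M *v b = 0" "transpose X *v b = v" "M *v e2 + K *v b = X *v l"
    unfolding R_def by auto
  show ?thesis unfolding R_def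
    apply (intro conjI exI[of _ "e1 - e2"])
    using 1 2 by (simp_all add: matrix_vector_mult_diff_distrib algebra_simps)
qed

lemma R_add:
  assumes "R 0 0 v1 a1 l1" "R 0 0 v2 a2 l2" shows "R 0 0 (v1 + v2) (a1 + a2) (l1 + l2)"
proof -
  from assms obtain e1 e2 where
    1: "M *v a1 = 0" "transpose X *v a1 = v1" "M *v e1 + K *v a1 = X *v l1" and
    2: "M *v a2 = 0" "transpose X *v a2 = v2" "M *v e2 + K *v a2 = X *v l2"
    unfolding R_def by auto
  show ?thesis unfolding R_def
    apply (intro conjI exI[of _ "e1 + e2"])
    using 1 2 by (simp_all add: matrix_vector_right_distrib algebra_simps)
qed

lemma R_scale:
  assumes "R 0 0 v a l" shows "R 0 0 (c *\<^sub>R v) (c *\<^sub>R a) (c *\<^sub>R l)"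
proof -
  from assms obtain e where
    1: "M *v a = 0" "transpose X *v a = v" "M *v e + K *v a = X *v l"
    unfolding R_def by auto
  have "M *v (c *\<^sub>R e) + K *v (c *\<^sub>R a) = c *\<^sub>R (M *v e + K *v a)"
    by (simp add: matrix_vector_mult_scaleR scaleR_right_distrib)
  then have "M *v (c *\<^sub>R e) + K *v (c *\<^sub>R a) = X *v (c *\<^sub>R l)"
    using 1 by (simp add: matrix_vector_mult_scaleR)
  then show ?thesis unfolding R_def
    apply (intro conjI exI[of _ "c *\<^sub>R e"])
    using 1 by (simp_all add: matrix_vector_mult_scaleR)
qed

lemma R_pos:
  assumes "R 0 0 v a l" "v \<noteq> 0" shows "v \<bullet> l > 0"
proof -
  from assms obtain e where
    1: "M *v a = 0" "transpose X *v a = v" "M *v e + K *v a = X *v l"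
    unfolding R_def by auto
  have a0: "a \<noteq> 0" using 1 assms(2) by auto
  have "v \<bullet> l = a \<bullet> (X *v l)" using 1(2) adj_inner[of a X l] by metis
  also have "\<dots> = a \<bullet> (M *v e) + a \<bullet> (K *v a)" by (subst 1(3)[symmetric]) (simp add: inner_add_right)
  also have "\<dots> = a \<bullet> ((M + K) *v a)"
    using 1 by (simp add: sym_inner[OF hM] matrix_vector_mult_add_rdistrib inner_add_right)
  finally show ?thesis using hpd[OF a0] by simp
qed

lemma R_ex: "\<exists>a l. R 0 0 v a l"
proof -
  define \<Phi> :: "(real^'k) \<times> (real^'k) \<times> (real^'s) \<Rightarrow> (real^'k) \<times> (real^'k) \<times> (real^'s)"
    where "\<Phi> = (\<lambda>(y, z, j). (K *v y + M *v z - X *v j, M *v y, transpose X *v y))"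
  have lin: "linear \<Phi>"
    by (rule linearI) (auto simp: \<Phi>_def algebra_simps scaleR_vector_matrix_assoc vector_matrix_left_distrib split: prod.splits)
  define t :: "(real^'k) \<times> (real^'k) \<times> (real^'s)" where "t = (0, 0, v)"
  obtain r q where r: "r \<in> span (range \<Phi>)" and q: "\<And>w. w \<in> span (range \<Phi>) \<Longrightarrow> orthogonal q w"
    and tq: "t = r + q"
    using orthogonal_subspace_decomp_exists by blast
  have sp: "span (range \<Phi>) = range \<Phi>"
    using span_linear_image[OF lin, of UNIV] by simp
  obtain q1 q2 q3 where qd: "q = (q1, q2, q3)" by (cases q) auto
  have orth: "q1 \<bullet> (K *v y + M *v z - X *v j) + q2 \<bullet> (M *v y) + q3 \<bullet> (transpose X *v y) = 0" for y z j
  proof -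
    have "\<Phi> (y, z, j) \<in> span (range \<Phi>)" by (rule span_base) simp
    from q[OF this] show ?thesis unfolding qd \<Phi>_def orthogonal_def by (simp add: add.assoc)
  qed
  have "q1 \<bullet> (X *v (transpose X *v q1)) = 0" using orth[of 0 0 "transpose X *v q1"] by simp
  hence "(transpose X *v q1) \<bullet> (transpose X *v q1) = 0" by (simp only: adj_inner)
  hence X1: "transpose X *v q1 = 0" by (simp only: inner_eq_zero_iff)
  have "q1 \<bullet> (M *v (M *v q1)) = 0" using orth[of 0 "M *v q1" 0] by simp
  hence "(M *v q1) \<bullet> (M *v q1) = 0" by (simp only: sym_inner[OF hM])
  hence M1: "M *v q1 = 0" by (simp only: inner_eq_zero_iff)
  have e3: "(K *v q1 + M *v q2 + X *v q3) \<bullet> y = 0" for y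
  proof -
    have "q1 \<bullet> (K *v y) + q2 \<bullet> (M *v y) + q3 \<bullet> (transpose X *v y) = 0"
      using orth[of y 0 0] by simp
    moreover have "q3 \<bullet> (transpose X *v y) = (X *v q3) \<bullet> y"
      by (simp only: adj_inner transpose_transpose)
    ultimately show ?thesis
      by (simp add: sym_inner[OF hM] sym_inner[OF hK] inner_add_left)
  qed
  have E: "K *v q1 + M *v q2 + X *v q3 = 0"
    using e3[of "K *v q1 + M *v q2 + X *v q3"] by simp
  have "q1 \<bullet> (K *v q1) = - (q1 \<bullet> (M *v q2)) - q1 \<bullet> (X *v q3)"
  proof -
    have "K *v q1 = - (M *v q2) - X *v q3" using E by (simp add: algebra_simps eq_neg_iff_add_eq_0)
    thus ?thesis by (simp add: inner_diff_right)
  qed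
  also have "\<dots> = 0"
  proof -
    have "q1 \<bullet> (M *v q2) = 0" using sym_inner[OF hM, of q1 q2] M1 by simp
    moreover have "q1 \<bullet> (X *v q3) = 0" using adj_inner[of q1 X q3] X1 by (metis inner_zero_left)
    ultimately show ?thesis by simp
  qed
  finally have q10: "q1 = 0" using kerM M1 by blast
  have neg: "X *v (- q3) = - (X *v q3)"
    by (metis matrix_vector_mult_diff_distrib matrix_vector_mult_0_right diff_0)
  have "X *v (- q3) = M *v q2" using E q10 unfolding neg by (simp add: add_eq_0_iff2 eq_commute[of "- _"])
  hence "- q3 = 0" by (rule inter0)
  hence tq0: "t \<bullet> q = 0" unfolding t_def qd by simp
  have "r \<bullet> q = 0" using q[OF r] unfolding orthogonal_def by (simp add: inner_commute)
  hence "q \<bullet> q = 0" using tq0 tq by (simp add: inner_add_left)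
  hence q0: "q = 0" by simp
  have "t \<in> range \<Phi>" using r tq q0 sp by simp
  then obtain y z j where "\<Phi> (y, z, j) = t" by auto
  hence "R 0 0 v y j" unfolding \<Phi>_def t_def R_def by (auto intro!: exI[of _ z] simp: algebra_simps)
  thus ?thesis by blast
qed

definition "Lm v = (THE l. \<exists>a. R 0 0 v a l)"
definition "Gm x i = (THE l. \<exists>a. R x i 0 a l)"
definition "fxm x i v (t::real) = (THE a. \<exists>l. R x i v a l)"

lemma Lm: "\<exists>a. R 0 0 v a (Lm v)"
proof -
  obtain a l where h: "R 0 0 v a l" using R_ex by blast
  have "Lm v = l" unfolding Lm_def
    by (rule the1_equality) (use h uniq in blast)+
  thus ?thesis using h by blast
qed

lemma Lm_eq: "R 0 0 v a l \<Longrightarrow> Lm v = l"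
  using Lm uniq by blast

lemma Lm_lin: "linear Lm"
proof (rule linearI)
  fix v1 v2
  obtain a1 a2 where "R 0 0 v1 a1 (Lm v1)" "R 0 0 v2 a2 (Lm v2)" using Lm by blast
  from R_add[OF this] show "Lm (v1 + v2) = Lm v1 + Lm v2" by (rule Lm_eq)
next
  fix c v
  obtain a where "R 0 0 v a (Lm v)" using Lm by blast
  from R_scale[OF this] show "Lm (c *\<^sub>R v) = c *\<^sub>R Lm v" by (rule Lm_eq)
qed

lemma Lm_pos: "v \<noteq> 0 \<Longrightarrow> v \<bullet> Lm v > 0"
  using Lm R_pos by blast

lemma decomp:
  assumes "R x i v a j" shows "a = fxm x i v t \<and> j = Gm x i + Lm v"
proof -
  have "fxm x i v t = a" unfolding fxm_def
    by (rule the1_equality) (use assms uniq in blast)+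
  moreover obtain b where b: "R 0 0 v b (Lm v)" using Lm by blast
  have d: "R x i 0 (a - b) (j - Lm v)" by (rule R_diff[OF assms b])
  have "Gm x i = j - Lm v" unfolding Gm_def
    by (rule the1_equality) (use d uniq in blast)+
  ultimately show ?thesis by simp
qed

lemma main: "inductance_like (Astar_DAE M K X)"
proof -
  let ?F = "Astar_DAE M K X"
  have linF: "linear ?F"
    by (rule linearI) (auto simp: Astar_DAE_def algebra_simps scaleR_vector_matrix_assoc
        vector_matrix_left_distrib split: prod.splits)
  have dF: "(?F has_derivative ?F) (at z)" for z
    by (rule bounded_linear_imp_has_derivative) (use linF linear_conv_bounded_linear in blast)
  have fdF: "frechet_derivative ?F (at z) = ?F" for z using frechet_derivative_at[OF dF] by simp
  define phi :: "(real^'s) \<times> (real^'k) \<times> real \<Rightarrow> real^'s" where "phi = fst"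
  have dphi: "(phi has_derivative phi) (at p)" for p
    unfolding phi_def by (rule bounded_linear_imp_has_derivative) (rule bounded_linear_fst)
  have fdphi: "frechet_derivative phi (at p) = phi" for p using frechet_derivative_at[OF dphi] by simp
  define fphi :: "real^'k \<Rightarrow> real^'s \<Rightarrow> real^'s \<Rightarrow> real \<Rightarrow> real^'s"
    where "fphi = (\<lambda>x i v t. Gm x i + Lm v)"
  have ie: "ind_expr phi fxm fphi x i w t = Gm x i + Lm w" for x i w t
    unfolding ind_expr_def fdphi Let_def by (simp add: phi_def fphi_def inv_identity)
  have blL: "bounded_linear Lm" using Lm_lin linear_conv_bounded_linear by blast
  have dL: "((\<lambda>w. ind_expr phi fxm fphi x i w t) has_derivative Lm) (at v)" for x i v t
    unfolding ie by (rule has_derivative_eq_rhs, rule has_derivative_add[OF has_derivative_const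
          bounded_linear_imp_has_derivative[OF blL]]) simp
  show ?thesis unfolding inductance_like_def
  proof (intro conjI allI exI[of _ fxm] exI[of _ fphi] exI[of _ phi] impI)
    show "?F differentiable at z" for z using dF differentiable_def by blast
    show "phi differentiable at p" for p using dphi differentiable_def by blast
    show "bij (\<lambda>h. frechet_derivative phi (at (i, x, t)) (h, 0, 0))" for i x t
      unfolding fdphi by (simp add: phi_def bij_id[unfolded id_def])
    show "(\<lambda>w. ind_expr phi fxm fphi x i w t) differentiable at v" for x i v t
      using dL differentiable_def by blast
    show "pos_def_map (frechet_derivative (\<lambda>w. ind_expr phi fxm fphi x i w t) (at v))" for x i v t
      unfolding frechet_derivative_at[OF dL, symmetric] pos_def_map_def using Lm_pos by blast
  next
    fix x' i' x'' i'' x i v v' t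
    assume h: "?F (x', i', x, i, v, t) = 0 \<and>
       frechet_derivative ?F (at (x', i', x, i, v, t)) (x'', i'', x', i', v', 1) = 0"
    have h1: "?F (x', i', x, i, v, t) = 0" and h2: "?F (x'', i'', x', i', v', 1) = 0"
      using h by (simp_all only: fdF)
    hence "R x i v x' i'" unfolding R_def Astar_DAE_def
      by (auto simp: zero_prod_def)
    from decomp[OF this, of t]
    show "x' = fxm x i v t" "frechet_derivative phi (at (i, x, t)) (i', x', 1) = fphi x i v t"
      unfolding fdphi by (simp_all add: phi_def fphi_def)
  qed
qed

end

theorem proposition7:
  fixes Msig Mnu C :: "real^'n^'n"
    and P :: "real^'k^'n"
    and Xs :: "real^'s^'n"
  defines "Mbar \<equiv> transpose P ** Msig ** P"
    and "K \<equiv> transpose P ** transpose C ** Mnu ** C ** P"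
    and "Xbar \<equiv> transpose P ** Xs"
  assumes "transpose Msig = Msig" and "pos_semidef_mat Msig"
    and "transpose Mnu = Mnu" and "pos_def_mat Mnu"
    and "\<forall>lam::real. lam > 0 \<longrightarrow> pos_def_mat (lam *\<^sub>R Mbar + K)"
    and "rank Xbar = CARD('s)"
    and "\<forall>u w. (Xbar *v u) \<bullet> (Mbar *v w) = 0"
  shows "inductance_like (Astar_DAE Mbar K Xbar)"
proof -
  interpret core Mbar K Xbar
  proof
    show "transpose Mbar = Mbar" unfolding Mbar_def
      by (simp add: matrix_transpose_mul assms(4) matrix_mul_assoc)
    show "transpose K = K" unfolding K_def
      by (simp add: matrix_transpose_mul assms(6) matrix_mul_assoc)
    show "y \<bullet> ((Mbar + K) *v y) > 0" if "y \<noteq> 0" for y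
      using assms(8) that unfolding pos_def_mat_def by (metis scaleR_one zero_less_one)
    show "inj ((*v) Xbar)" using assms(9) full_rank_injective by blast
    show "(Xbar *v u) \<bullet> (Mbar *v w) = 0" for u w using assms(10) by blast
  qed
  show ?thesis by (rule main)
qed

end
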